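(* Let $t\ge1$, $w\in\mathbb{R}^t_{++}$, $\rho>0$, and let $\partial_{\rm HS}\mathrm{Prox}_{\rho\|w\circ\cdot\|_1^2}:\mathbb{R}^t\rightrightarrows\mathbb{R}^{t\times t}$ be the multifunction defined in the context. Then $\partial_{\rm HS}\mathrm{Prox}_{\rho\|w\circ\cdot\|_1^2}$ is a nonempty, compact valued and upper-semicontinuous multifunction; for every $a\in\mathbb{R}^t$ all elements of $\partial_{\rm HS}\mathrm{Prox}_{\rho\|w\circ\cdot\|_1^2}(a)$ are symmetric and positive semidefinite; and $\mathrm{Prox}_{\rho\|w\circ\cdot\|_1^2}(\cdot)$ is strongly semismooth with respect to $\partial_{\rm HS}\mathrm{Prox}_{\rho\|w\circ\cdot\|_1^2}(\cdot)$.
   Context: $\mathrm{Prox}_{\rho\|w\circ\cdot\|_1^2}(a):=\arg\min_z\{\frac12\|z-a\|^2+\rho\|w\circ z\|_1^2\}$, $\circ$ the Hadamard product. Let $Q:=I_t+2\rho ww^T$. For $a\in\mathbb{R}^t$ let $x(a):=\arg\min_{x\in\mathbb{R}^t}\{\frac12\langle x,Qx\rangle-\langle x,a\rangle\mid x\ge0\}$ and let $\mu(a)$ be the (unique) multiplier with $Qx(a)-a+\mu(a)=0$, $\mu(a)\circ x(a)=0$, $\mu(a)\le0$. Let $I(a):=\{i\mid x(a)_i=0\}$, $\mathcal{K}(a):=\{K\subseteq\{1,\dots,t\}\mid \mathrm{supp}(\mu(a))\subseteq K\subseteq I(a)\}$, where $\mathrm{supp}(\mu)=\{i:\mu_i\ne0\}$,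 and let $I_K$ be the matrix of rows of $I_t$ indexed by $K$. Define $\widehat\partial_{\rm HS}x(a)$ to be: $\{Q^{-1}\}$ if $Q^{-1}a>0$ (entrywise); $\{Q^{-1}-Q^{-1}I_K^T(I_KQ^{-1}I_K^T)^{-1}I_KQ^{-1}\mid K\in\mathcal{K}(a)\}$ if $(Q^{-1}a)_i<0$ for some $i$; and $\{Q^{-1}\}\cup\{Q^{-1}-Q^{-1}I_K^T(I_KQ^{-1}I_K^T)^{-1}I_KQ^{-1}\mid K\in\mathcal{K}(a)\}$ otherwise. Let $\mathrm{SGN}(z):=\{u\in\mathbb{R}^t: u_j=\mathrm{sign}(z_j)\text{ if }z_j\ne0,\ u_j\in[-1,1]\text{ if }z_j=0\}$. Then $\partial_{\rm HS}\mathrm{Prox}_{\rho\|w\circ\cdot\|_1^2}(a):=\{\mathrm{Diag}(\theta)P\,\mathrm{Diag}(\theta)\mid\theta\in\mathrm{SGN}(a),\ P\in\widehat\partial_{\rm HS}x(|a|)\}$. A locally Lipschitz $F$ is strongly semismooth at $a$ with respect to a multifunction $\mathcal{J}$ if $F$ is directionally differentiable at $a$ and $\|F(a')-F(a)-M(a'-a)\|=O(\|a'-a\|^2)$ as $a'\to a$, uniformly over $M\in\mathcal{J}(a')$; strongly semismooth means at every point. *)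

theory Defs
  imports "HOL-Analysis.Analysis"
begin

text \<open>Vectors in R^t are modelled as real^'n (t = CARD('n) \<ge> 1), t x t matrices as real^'n^'n.\<close>

definition wl1sq :: "real^'n \<Rightarrow> real^'n \<Rightarrow> real" where
  "wl1sq w z = (\<Sum>i\<in>UNIV. \<bar>w$i * z$i\<bar>)^2"

definition prox :: "real \<Rightarrow> real^'n \<Rightarrow> real^'n \<Rightarrow> real^'n" where
  "prox \<rho> w a = (THE z. \<forall>y. (1/2) * (norm (z - a))^2 + \<rho> * wl1sq w z
                              \<le> (1/2) * (norm (y - a))^2 + \<rho> * wl1sq w y)"

definition Qmat :: "real \<Rightarrow> real^'n \<Rightarrow> real^'n^'n" where
  "Qmat \<rho> w = mat 1 + (2 * \<rho>) *\<^sub>R (\<chi> i j. w$i * w$j)"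

definition Qinv :: "real \<Rightarrow> real^'n \<Rightarrow> real^'n^'n" where
  "Qinv \<rho> w = matrix_inv (Qmat \<rho> w)"

definition qobj :: "real \<Rightarrow> real^'n \<Rightarrow> real^'n \<Rightarrow> real^'n \<Rightarrow> real" where
  "qobj \<rho> w a x = (1/2) * (x \<bullet> (Qmat \<rho> w *v x)) - x \<bullet> a"

definition xsol :: "real \<Rightarrow> real^'n \<Rightarrow> real^'n \<Rightarrow> real^'n" where
  "xsol \<rho> w a = (THE x. (\<forall>i. 0 \<le> x$i) \<and>
      (\<forall>y. (\<forall>i. 0 \<le> y$i) \<longrightarrow> qobj \<rho> w a x \<le> qobj \<rho> w a y))"

definition musol :: "real \<Rightarrow> real^'n \<Rightarrow> real^'n \<Rightarrow> real^'n" where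
  "musol \<rho> w a = (THE \<mu>. Qmat \<rho> w *v xsol \<rho> w a - a + \<mu> = 0 \<and>
      (\<forall>i. \<mu>$i * (xsol \<rho> w a)$i = 0) \<and> (\<forall>i. \<mu>$i \<le> 0))"

definition Iset :: "real \<Rightarrow> real^'n \<Rightarrow> real^'n \<Rightarrow> 'n set" where
  "Iset \<rho> w a = {i. (xsol \<rho> w a)$i = 0}"

definition Kfam :: "real \<Rightarrow> real^'n \<Rightarrow> real^'n \<Rightarrow> 'n set set" where
  "Kfam \<rho> w a = {K. {i. (musol \<rho> w a)$i \<noteq> 0} \<subseteq> K \<and> K \<subseteq> Iset \<rho> w a}"

text \<open>selK K = I_K^T I_K (diagonal 0/1 matrix with ones on K).\<close>
definition selK :: "'n set \<Rightarrow> real^'n^'n" where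
  "selK K = (\<chi> i j. if i = j \<and> i \<in> K then 1 else 0)"

text \<open>padinv K M renders I_K^T (I_K M I_K^T)^{-1} I_K as a t x t matrix:
  the inverse of the principal K-submatrix of M, padded by zeros. Since
  blockdiag(M_KK, I)^{-1} = blockdiag(M_KK^{-1}, I), it is obtained as below.\<close>
definition padinv :: "'n set \<Rightarrow> real^'n^'n \<Rightarrow> real^'n^'n" where
  "padinv K M = matrix_inv (selK K ** M ** selK K + (mat 1 - selK K)) - (mat 1 - selK K)"

definition hatHS :: "real \<Rightarrow> real^'n \<Rightarrow> real^'n \<Rightarrow> (real^'n^'n) set" where
  "hatHS \<rho> w a =
    (let Qi = Qinv \<rho> w;
         S = {Qi - Qi ** padinv K Qi ** Qi | K. K \<in> Kfam \<rho> w a}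
     in if (\<forall>i. (Qi *v a)$i > 0) then {Qi}
        else if (\<exists>i. (Qi *v a)$i < 0) then S
        else insert Qi S)"

definition SGN :: "real^'n \<Rightarrow> (real^'n) set" where
  "SGN z = {u. \<forall>j. (z$j \<noteq> 0 \<longrightarrow> u$j = sgn (z$j)) \<and> (z$j = 0 \<longrightarrow> -1 \<le> u$j \<and> u$j \<le> 1)}"

definition Diag :: "real^'n \<Rightarrow> real^'n^'n" where
  "Diag \<theta> = (\<chi> i j. if i = j then \<theta>$i else 0)"

definition vabs :: "real^'n \<Rightarrow> real^'n" where
  "vabs a = (\<chi> i. \<bar>a$i\<bar>)"

definition dHS :: "real \<Rightarrow> real^'n \<Rightarrow> real^'n \<Rightarrow> (real^'n^'n) set" where
  "dHS \<rho> w a = {Diag \<theta> ** P ** Diag \<theta> | \<theta> P. \<theta> \<in> SGN a \<and> P \<in> hatHS \<rho> w (vabs a)}"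

definition usc_multifun :: "('a::metric_space \<Rightarrow> 'b::topological_space set) \<Rightarrow> bool" where
  "usc_multifun F \<longleftrightarrow> (\<forall>a U. open U \<and> F a \<subseteq> U \<longrightarrow>
      (\<exists>\<delta>>0. \<forall>a'. dist a' a < \<delta> \<longrightarrow> F a' \<subseteq> U))"

definition locally_lipschitz :: "(real^'n \<Rightarrow> real^'m) \<Rightarrow> bool" where
  "locally_lipschitz F \<longleftrightarrow> (\<forall>a. \<exists>\<delta>>0. \<exists>L. \<forall>x\<in>ball a \<delta>. \<forall>y\<in>ball a \<delta>.
      norm (F x - F y) \<le> L * norm (x - y))"

definition dir_differentiable_at :: "(real^'n \<Rightarrow> real^'m) \<Rightarrow> real^'n \<Rightarrow> bool" where
  "dir_differentiable_at F a \<longleftrightarrow> (\<forall>d. \<exists>L.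
      ((\<lambda>\<tau>. (1/\<tau>) *\<^sub>R (F (a + \<tau> *\<^sub>R d) - F a)) \<longlongrightarrow> L) (at_right 0))"

definition strongly_semismooth_at ::
  "(real^'n \<Rightarrow> real^'m) \<Rightarrow> (real^'n \<Rightarrow> (real^'n^'m) set) \<Rightarrow> real^'n \<Rightarrow> bool" where
  "strongly_semismooth_at F J a \<longleftrightarrow> dir_differentiable_at F a \<and>
     (\<exists>C \<delta>. \<delta> > 0 \<and> (\<forall>a'. norm (a' - a) < \<delta> \<longrightarrow> (\<forall>M\<in>J a'.
        norm (F a' - F a - M *v (a' - a)) \<le> C * (norm (a' - a))^2)))"

definition strongly_semismooth ::
  "(real^'n \<Rightarrow> real^'m) \<Rightarrow> (real^'n \<Rightarrow> (real^'n^'m) set) \<Rightarrow> bool" where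
  "strongly_semismooth F J \<longleftrightarrow> locally_lipschitz F \<and> (\<forall>a. strongly_semismooth_at F J a)"

end

theory Submission imports Defs begin

lemma Q_mult: "Qmat \<rho> w *v v = v + (2*\<rho>*(w \<bullet> v)) *\<^sub>R w"
proof -
  have "(Qmat \<rho> w *v v) $ i = v $ i + 2*\<rho>*(w \<bullet> v) * w $ i" for i
  proof -
    have "(Qmat \<rho> w *v v) $ i = (\<Sum>j\<in>UNIV. (if i = j then v$j else 0) + 2*\<rho>*w$i*(w$j * v$j))"
      by (simp add: Qmat_def matrix_vector_mult_def mat_def algebra_simps) (rule sum.cong, auto)
    also have "\<dots> = (\<Sum>j\<in>UNIV. (if i = j then v$j else 0)) + 2*\<rho>*w$i*(\<Sum>j\<in>UNIV. w$j * v$j)"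
      by (simp add: sum.distrib sum_distrib_left)
    also have "\<dots> = v $ i + 2*\<rho>*(w \<bullet> v) * w $ i"
      by (simp add: inner_vec_def)
    finally show ?thesis .
  qed
  then show ?thesis by (simp add: vec_eq_iff)
qed

lemma Q_quad: "v \<bullet> (Qmat \<rho> w *v v) = v \<bullet> v + 2*\<rho>*(w \<bullet> v)^2"
  by (simp add: Q_mult inner_add_right power2_eq_square inner_commute)

lemma Q_sym: "x \<bullet> (Qmat \<rho> w *v y) = (Qmat \<rho> w *v x) \<bullet> y"
  by (simp add: Q_mult inner_add_right inner_add_left inner_commute)

lemma self_le0: "(x::'a::real_inner) \<bullet> x \<le> 0 \<Longrightarrow> x = 0"
  using inner_ge_zero[of x] by (simp add: order_antisym)

lemma inv_of_inj:
  fixes A :: "real^'n^'n"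
  assumes "\<And>v. A *v v = 0 \<Longrightarrow> v = 0"
  shows "matrix_inv A ** A = mat 1 \<and> A ** matrix_inv A = mat 1"
proof -
  have "inj ((*v) A)"
    by (metis (no_types, lifting) assms inj_on_def matrix_vector_mult_diff_distrib right_minus_eq)
  then have "invertible A" using matrix_left_invertible_injective invertible_left_inverse by blast
  then show ?thesis unfolding invertible_def matrix_inv_def by (metis (mono_tags, lifting) someI_ex)
qed

lemma inv_apply:
  fixes A :: "real^'n^'n"
  assumes "\<And>v. A *v v = 0 \<Longrightarrow> v = 0"
  shows "matrix_inv A *v (A *v v) = v" "A *v (matrix_inv A *v v) = v"
  using inv_of_inj[OF assms] by (metis matrix_vector_mul_assoc matrix_vector_mul_lid)+

lemma dummy_true: True by simp

definition KKT :: "real \<Rightarrow> real^'n \<Rightarrow> real^'n \<Rightarrow> real^'n \<Rightarrow> bool" where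
 "KKT r v b x \<longleftrightarrow> (\<forall>i. 0 \<le> x$i) \<and> (\<forall>i. (b - Qmat r v *v x)$i \<le> 0) \<and> (\<forall>i. (b - Qmat r v *v x)$i * x$i = 0)"

lemma cont_tendsto_nhds:
  fixes f :: "real^'n \<Rightarrow> real^'m"
  assumes "continuous_on UNIV f"
  shows "((\<lambda>x. f x $ i) \<longlongrightarrow> f a $ i) (nhds a)"
proof -
  have "isCont f a" using assms continuous_on_eq_continuous_at[OF open_UNIV] by blast
  then have "(f \<longlongrightarrow> f a) (nhds a)" unfolding isCont_def tendsto_at_iff_tendsto_nhds .
  then show ?thesis by (rule tendsto_vec_nth)
qed

lemma ev_gt:
  fixes f :: "real^'n \<Rightarrow> real^'m"
  assumes "continuous_on UNIV f"
  shows "eventually (\<lambda>x. \<forall>i. f a $ i > 0 \<longrightarrow> f x $ i > 0) (nhds a)"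
proof (rule eventually_all_finite)
  fix i
  show "eventually (\<lambda>x. f a $ i > 0 \<longrightarrow> f x $ i > 0) (nhds a)"
  proof (cases "f a $ i > 0")
    case True
    from order_tendstoD(1)[OF cont_tendsto_nhds[OF assms] True] show ?thesis by (rule eventually_mono) simp
  qed simp
qed

lemma ev_lt:
  fixes f :: "real^'n \<Rightarrow> real^'m"
  assumes "continuous_on UNIV f"
  shows "eventually (\<lambda>x. \<forall>i. f a $ i < 0 \<longrightarrow> f x $ i < 0) (nhds a)"
proof (rule eventually_all_finite)
  fix i
  show "eventually (\<lambda>x. f a $ i < 0 \<longrightarrow> f x $ i < 0) (nhds a)"
  proof (cases "f a $ i < 0")
    case True
    from order_tendstoD(2)[OF cont_tendsto_nhds[OF assms] True] show ?thesis by (rule eventually_mono) simp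
  qed simp
qed

lemma ev_ne:
  fixes f :: "real^'n \<Rightarrow> real^'m"
  assumes "continuous_on UNIV f"
  shows "eventually (\<lambda>x. \<forall>i. f a $ i \<noteq> 0 \<longrightarrow> f x $ i \<noteq> 0) (nhds a)"
proof (rule eventually_all_finite)
  fix i
  show "eventually (\<lambda>x. f a $ i \<noteq> 0 \<longrightarrow> f x $ i \<noteq> 0) (nhds a)"
  proof (cases "f a $ i \<noteq> 0")
    case True
    from tendsto_imp_eventually_ne[OF cont_tendsto_nhds[OF assms] True] show ?thesis by (rule eventually_mono) simp
  qed simp
qed

lemma cont_vabs: "continuous_on UNIV (vabs :: real^'n \<Rightarrow> real^'n)"
  unfolding vabs_def by (intro continuous_intros)

context
  fixes \<rho> :: real and w :: "real^'n"
  assumes wpos: "\<forall>i. w$i > 0" and rpos: "\<rho> > 0"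
begin

lemma Q_ge: "v \<bullet> v \<le> v \<bullet> (Qmat \<rho> w *v v)"
  using rpos by (simp add: Q_quad)

lemma Q_inj: "Qmat \<rho> w *v v = 0 \<Longrightarrow> v = 0"
  using Q_ge[of v] self_le0 by simp

lemma Qi_left: "Qinv \<rho> w *v (Qmat \<rho> w *v v) = v"
  and Qi_right: "Qmat \<rho> w *v (Qinv \<rho> w *v v) = v"
  unfolding Qinv_def using inv_apply[OF Q_inj] by blast+

lemma Qi_sym: "x \<bullet> (Qinv \<rho> w *v y) = (Qinv \<rho> w *v x) \<bullet> y"
  by (metis Q_sym Qi_right)

lemma Qi_psd: "0 \<le> v \<bullet> (Qinv \<rho> w *v v)"
proof -
  have "v \<bullet> (Qinv \<rho> w *v v) = (Qinv \<rho> w *v v) \<bullet> (Qmat \<rho> w *v (Qinv \<rho> w *v v))"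
    by (metis Qi_right inner_commute)
  also have "\<dots> \<ge> 0" by (metis Q_ge inner_ge_zero order_trans)
  finally show ?thesis .
qed

lemma Qi_pd: "v \<bullet> (Qinv \<rho> w *v v) = 0 \<Longrightarrow> v = 0"
proof -
  assume h: "v \<bullet> (Qinv \<rho> w *v v) = 0"
  have "v \<bullet> (Qinv \<rho> w *v v) = (Qinv \<rho> w *v v) \<bullet> (Qmat \<rho> w *v (Qinv \<rho> w *v v))"
    by (metis Qi_right inner_commute)
  then have "(Qinv \<rho> w *v v) \<bullet> (Qinv \<rho> w *v v) \<le> 0" using h Q_ge by metis
  then have "Qinv \<rho> w *v v = 0" by (rule self_le0)
  then show "v = 0" by (metis Qi_right matrix_vector_mult_0_right)
qed


lemma KKT_exists: "\<exists>x. KKT \<rho> w b x"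
proof -
  define g where "g s = (\<Sum>i\<in>UNIV. w$i * max (b$i - 2*\<rho>*w$i * s) 0) - s" for s
  define s0 where "s0 = (\<Sum>i\<in>UNIV. w$i * max (b$i) 0)"
  have s0: "0 \<le> s0" unfolding s0_def using wpos by (intro sum_nonneg) (simp add: less_imp_le)
  have g0: "0 \<le> g 0" unfolding g_def using wpos by (simp, intro sum_nonneg) (simp add: less_imp_le)
  have "(\<Sum>i\<in>UNIV. w$i * max (b$i - 2*\<rho>*w$i * s0) 0) \<le> (\<Sum>i\<in>UNIV. w$i * max (b$i) 0)"
  proof (rule sum_mono)
    fix i
    have c: "0 \<le> 2*\<rho>*w$i * s0" using wpos rpos s0 by (simp add: less_imp_le)
    have "b$i - 2*\<rho>*w$i * s0 \<le> b$i" using c by linarith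
    then have "max (b$i - 2*\<rho>*w$i * s0) 0 \<le> max (b$i) 0" by (intro max.mono) auto
    then show "w$i * max (b$i - 2*\<rho>*w$i * s0) 0 \<le> w$i * max (b$i) 0"
      using wpos by (simp add: less_imp_le mult_left_mono)
  qed
  then have g1: "g s0 \<le> 0" unfolding g_def s0_def[symmetric] by simp
  have "\<forall>s. 0 \<le> s \<and> s \<le> s0 \<longrightarrow> isCont g s" unfolding g_def by (auto intro!: continuous_intros)
  then obtain s where s: "0 \<le> s" "g s = 0" using IVT2[of g s0 0 0] g0 g1 s0 by auto
  define x where "x = (\<chi> i. max (b$i - 2*\<rho>*w$i * s) 0)"
  have wx: "w \<bullet> x = s" using s(2) unfolding g_def x_def inner_vec_def by simp
  have mu: "(b - Qmat \<rho> w *v x)$i = b$i - x$i - 2*\<rho> * s * w$i" for i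
    by (simp add: Q_mult wx)
  have "KKT \<rho> w b x" unfolding KKT_def mu
  proof (intro conjI allI)
    fix i
    show "0 \<le> x $ i" by (simp add: x_def)
    show "b $ i - x $ i - 2 * \<rho> * s * w $ i \<le> 0"
      by (simp add: x_def max_def mult.commute mult.left_commute)
    show "(b $ i - x $ i - 2 * \<rho> * s * w $ i) * x $ i = 0"
      by (simp add: x_def max_def mult.commute mult.left_commute)
  qed
  then show ?thesis by blast
qed

lemma KKT_opt:
  assumes "KKT \<rho> w b x" "\<forall>i. 0 \<le> y$i"
  shows "qobj \<rho> w b x + (1/2) * ((y - x) \<bullet> (y - x)) \<le> qobj \<rho> w b y"
proof -
  define d where "d = y - x"
  define \<mu> where "\<mu> = b - Qmat \<rho> w *v x"
  have y: "y = x + d" by (simp add: d_def)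
  have eq: "qobj \<rho> w b y = qobj \<rho> w b x + ((1/2) * (d \<bullet> (Qmat \<rho> w *v d)) - d \<bullet> \<mu>)"
    unfolding qobj_def y \<mu>_def
    using Q_sym[of x \<rho> w d] by (simp add: matrix_vector_right_distrib inner_add_left inner_add_right inner_diff_right algebra_simps inner_commute)
  have "\<forall>i. x$i * \<mu>$i = 0" using assms(1) unfolding KKT_def \<mu>_def by (metis mult.commute)
  then have xm: "x \<bullet> \<mu> = 0" by (auto simp: inner_vec_def intro!: sum.neutral)
  have ym: "y \<bullet> \<mu> \<le> 0" using assms unfolding KKT_def \<mu>_def inner_vec_def
    by (intro sum_nonpos) (simp add: mult_nonneg_nonpos)
  have "d \<bullet> \<mu> = y \<bullet> \<mu> - x \<bullet> \<mu>" by (simp add: d_def inner_diff_left)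
  then have "d \<bullet> \<mu> \<le> 0" using xm ym by simp
  moreover have "d \<bullet> d \<le> d \<bullet> (Qmat \<rho> w *v d)" by (rule Q_ge)
  ultimately show ?thesis unfolding eq d_def[symmetric] by simp
qed

lemma xsol_eq:
  assumes "KKT \<rho> w b x" shows "xsol \<rho> w b = x"
  unfolding xsol_def
proof (rule the_equality)
  show "(\<forall>i. 0 \<le> x $ i) \<and> (\<forall>y. (\<forall>i. 0 \<le> y $ i) \<longrightarrow> qobj \<rho> w b x \<le> qobj \<rho> w b y)"
  proof (intro conjI allI impI)
    show "0 \<le> x $ i" for i using assms unfolding KKT_def by blast
    fix y :: "real^'n" assume "\<forall>i. 0 \<le> y $ i"
    then have "qobj \<rho> w b x + (1/2) * ((y - x) \<bullet> (y - x)) \<le> qobj \<rho> w b y" by (rule KKT_opt[OF assms])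
    moreover have "0 \<le> (1/2) * ((y - x) \<bullet> (y - x))" by simp
    ultimately show "qobj \<rho> w b x \<le> qobj \<rho> w b y" by linarith
  qed
  fix y assume h: "(\<forall>i. 0 \<le> y $ i) \<and> (\<forall>z. (\<forall>i. 0 \<le> z $ i) \<longrightarrow> qobj \<rho> w b y \<le> qobj \<rho> w b z)"
  have "qobj \<rho> w b y \<le> qobj \<rho> w b x" using h assms unfolding KKT_def by blast
  then have "(y - x) \<bullet> (y - x) \<le> 0" using KKT_opt[OF assms, of y] h by simp
  then show "y = x" using self_le0 by force
qed

lemma xsol_KKT: "KKT \<rho> w b (xsol \<rho> w b)"
  using KKT_exists xsol_eq by metis

lemma musol_eq: "musol \<rho> w b = b - Qmat \<rho> w *v xsol \<rho> w b"
  unfolding musol_def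
proof (rule the_equality)
  show "Qmat \<rho> w *v xsol \<rho> w b - b + (b - Qmat \<rho> w *v xsol \<rho> w b) = 0 \<and>
    (\<forall>i. (b - Qmat \<rho> w *v xsol \<rho> w b) $ i * xsol \<rho> w b $ i = 0) \<and>
    (\<forall>i. (b - Qmat \<rho> w *v xsol \<rho> w b) $ i \<le> 0)"
    using xsol_KKT[of b] unfolding KKT_def by simp
qed (simp add: algebra_simps eq_neg_iff_add_eq_0[symmetric])

lemma xsol_nonneg: "0 \<le> xsol \<rho> w b $ i"
  using xsol_KKT[of b] unfolding KKT_def by simp

lemma xsol_zero:
  assumes "b $ j \<le> 0" shows "xsol \<rho> w b $ j = 0"
proof (rule ccontr)
  let ?x = "xsol \<rho> w b"
  assume "?x $ j \<noteq> 0"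
  then have pos: "?x $ j > 0" using xsol_nonneg[of b j] by simp
  have "(b - Qmat \<rho> w *v ?x) $ j * ?x $ j = 0" using xsol_KKT[of b] unfolding KKT_def by blast
  then have "(b - Qmat \<rho> w *v ?x) $ j = 0" using pos by simp
  then have e: "b $ j = ?x $ j + 2*\<rho>*(w \<bullet> ?x) * w $ j" by (simp add: Q_mult)
  have "0 \<le> w \<bullet> ?x" unfolding inner_vec_def using wpos xsol_nonneg
    by (intro sum_nonneg) (simp add: less_imp_le)
  then have "0 \<le> 2*\<rho>*(w \<bullet> ?x) * w $ j" using rpos wpos by (simp add: less_imp_le)
  then show False using e pos assms by linarith
qed


lemma lim0_le: fixes A B C :: real
  assumes "\<forall>s. 0 < s \<and> s < 1 \<longrightarrow> A \<le> B + s * C" "0 \<le> C" shows "A \<le> B"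
proof (rule ccontr)
  assume "\<not> A \<le> B"
  then have e: "A - B > 0" by simp
  define s where "s = min (1/2) ((A - B) / (C + 1))"
  have s0: "0 < s" "s < 1" using e assms(2) by (auto simp: s_def)
  have "s * C \<le> ((A - B) / (C + 1)) * C" using s0 assms(2) by (intro mult_right_mono) (auto simp: s_def)
  also have "\<dots> < A - B" using e assms(2) by (simp add: field_simps)
  finally show False using assms(1) s0 by force
qed

lemma wl1_conv:
  assumes "0 \<le> s" "s \<le> 1"
  shows "wl1sq w ((1-s) *\<^sub>R y + s *\<^sub>R z) \<le> (1-s) * wl1sq w y + s * wl1sq w z"
proof -
  define g where "g u = (\<Sum>i\<in>UNIV. \<bar>w$i * u$i\<bar>)" for u :: "real^'n"
  have g0: "0 \<le> g u" for u unfolding g_def by (simp add: sum_nonneg)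
  have "g ((1-s) *\<^sub>R y + s *\<^sub>R z) \<le> (\<Sum>i\<in>UNIV. (1-s) * \<bar>w$i * y$i\<bar> + s * \<bar>w$i * z$i\<bar>)"
    unfolding g_def
  proof (rule sum_mono)
    fix i
    have "\<bar>w$i * ((1-s) * y$i + s * z$i)\<bar> = \<bar>(1-s) * (w$i * y$i) + s * (w$i * z$i)\<bar>" by (simp add: algebra_simps)
    also have "\<dots> \<le> \<bar>(1-s) * (w$i * y$i)\<bar> + \<bar>s * (w$i * z$i)\<bar>" by (rule abs_triangle_ineq)
    also have "\<dots> = (1-s) * \<bar>w$i * y$i\<bar> + s * \<bar>w$i * z$i\<bar>" using assms by (simp add: abs_mult)
    finally show "\<bar>w$i * ((1-s) *\<^sub>R y + s *\<^sub>R z)$i\<bar> \<le> (1-s) * \<bar>w$i * y$i\<bar> + s * \<bar>w$i * z$i\<bar>" by simp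
  qed
  also have "\<dots> = (1-s) * g y + s * g z" unfolding g_def by (simp add: sum.distrib sum_distrib_left)
  finally have h: "g ((1-s) *\<^sub>R y + s *\<^sub>R z) \<le> (1-s) * g y + s * g z" .
  have "(g ((1-s) *\<^sub>R y + s *\<^sub>R z))^2 \<le> ((1-s) * g y + s * g z)^2"
    using h g0 by (intro power_mono) auto
  also have "\<dots> \<le> (1-s) * (g y)^2 + s * (g z)^2"
  proof -
    have "(1-s) * (g y)^2 + s * (g z)^2 - ((1-s) * g y + s * g z)^2 = s * (1-s) * (g y - g z)^2"
      by (simp add: power2_eq_square algebra_simps)
    moreover have "0 \<le> s * (1-s) * (g y - g z)^2" using assms by simp
    ultimately show ?thesis by linarith
  qed
  finally show ?thesis unfolding wl1sq_def g_def .
qed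

lemma quad_conv:
  fixes y z a :: "'a::real_inner"
  shows "(norm ((1-s) *\<^sub>R y + s *\<^sub>R z - a))^2 = (1-s) * (norm (y - a))^2 + s * (norm (z - a))^2 - s*(1-s)*(norm (y - z))^2"
proof -
  have e: "(1-s) *\<^sub>R y + s *\<^sub>R z - a = (1-s) *\<^sub>R (y - a) + s *\<^sub>R (z - a)" by (simp add: algebra_simps)
  have e2: "y - z = (y - a) - (z - a)" by simp
  show ?thesis unfolding e e2 power2_norm_eq_inner
    by (simp add: inner_add_left inner_add_right inner_diff_left inner_diff_right inner_commute algebra_simps)
qed

definition phi :: "real \<Rightarrow> real^'n \<Rightarrow> real^'n \<Rightarrow> real^'n \<Rightarrow> real" where
  "phi r v a y = (1/2) * (norm (y - a))^2 + r * wl1sq v y"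

lemma phi_conv:
  assumes "0 \<le> s" "s \<le> 1"
  shows "phi \<rho> w a ((1-s) *\<^sub>R y + s *\<^sub>R z) \<le> (1-s) * phi \<rho> w a y + s * phi \<rho> w a z - (1/2) * s * (1-s)*(norm (y - z))^2"
proof -
  have W: "\<rho> * wl1sq w ((1-s) *\<^sub>R y + s *\<^sub>R z) \<le> (1-s) * (\<rho> * wl1sq w y) + s * (\<rho> * wl1sq w z)"
    using mult_left_mono[OF wl1_conv[OF assms, of y z], of \<rho>] rpos by (simp add: algebra_simps)
  have L: "phi \<rho> w a ((1-s) *\<^sub>R y + s *\<^sub>R z) = (1/2) * ((1-s) * (norm (y - a))^2 + s * (norm (z - a))^2 - s*(1-s)*(norm (y - z))^2) + \<rho> * wl1sq w ((1-s) *\<^sub>R y + s *\<^sub>R z)"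
    unfolding phi_def quad_conv ..
  have R: "(1-s) * phi \<rho> w a y + s * phi \<rho> w a z - (1/2) * s * (1-s)*(norm (y - z))^2 =
     (1/2) * ((1-s) * (norm (y - a))^2 + s * (norm (z - a))^2 - s*(1-s)*(norm (y - z))^2) + ((1-s) * (\<rho> * wl1sq w y) + s * (\<rho> * wl1sq w z))"
    unfolding phi_def by (simp add: field_simps)
  show ?thesis unfolding L R using W by linarith
qed

lemma phi_growth:
  assumes "\<forall>y. phi \<rho> w a z \<le> phi \<rho> w a y"
  shows "phi \<rho> w a z + (1/2) * (norm (y - z))^2 \<le> phi \<rho> w a y"
proof -
  have "\<forall>s. 0 < s \<and> s < 1 \<longrightarrow> phi \<rho> w a z + (1/2) * (norm (y - z))^2 \<le> phi \<rho> w a y + s * ((1/2) * (norm (y - z))^2)"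
  proof (intro allI impI)
    fix s :: real assume s: "0 < s \<and> s < 1"
    have "phi \<rho> w a z \<le> phi \<rho> w a ((1-s) *\<^sub>R z + s *\<^sub>R y)" using assms by blast
    also have "\<dots> \<le> (1-s) * phi \<rho> w a z + s * phi \<rho> w a y - (1/2) * s * (1-s)*(norm (z - y))^2"
      using phi_conv s by simp
    finally have "s * phi \<rho> w a z \<le> s * (phi \<rho> w a y - (1/2)*(1-s)*(norm (z - y))^2)"
      by (simp add: algebra_simps)
    then have "phi \<rho> w a z \<le> phi \<rho> w a y - (1/2)*(1-s)*(norm (z - y))^2" using s by simp
    moreover have X: "(1/2)*(1-s)*X = (1/2) * X - s * ((1/2) * X)" for X :: real
      by (simp add: field_simps)
    moreover have "(1/2)*(1-s)*(norm (z - y))^2 = (1/2) * (norm (y - z))^2 - s * ((1/2) * (norm (y - z))^2)"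
      using X[of "(norm (y - z))^2"] norm_minus_commute[of z y] by simp
    ultimately show "phi \<rho> w a z + (1/2) * (norm (y - z))^2 \<le> phi \<rho> w a y + s * ((1/2) * (norm (y - z))^2)"
      by linarith
  qed
  then show ?thesis by (rule lim0_le) simp
qed

lemma phi_unique:
  assumes "\<forall>y. phi \<rho> w a z \<le> phi \<rho> w a y" "\<forall>y. phi \<rho> w a z' \<le> phi \<rho> w a y"
  shows "z' = z"
proof -
  have "phi \<rho> w a z + (1/2) * (norm (z' - z))^2 \<le> phi \<rho> w a z'" using phi_growth[OF assms(1), of z'] .
  moreover have "phi \<rho> w a z' \<le> phi \<rho> w a z" using assms(2) by blast
  ultimately have "(norm (z' - z))^2 \<le> 0" by linarith
  then show ?thesis by simp
qed


lemma prox_char: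
  assumes "\<forall>y. phi \<rho> w a z \<le> phi \<rho> w a y"
  shows "prox \<rho> w a = z"
  unfolding prox_def
proof (rule the_equality)
  show "\<forall>y. (1/2) * (norm (z - a))^2 + \<rho> * wl1sq w z \<le> (1/2) * (norm (y - a))^2 + \<rho> * wl1sq w y"
    using assms unfolding phi_def .
  fix z' assume "\<forall>y. (1/2) * (norm (z' - a))^2 + \<rho> * wl1sq w z' \<le> (1/2) * (norm (y - a))^2 + \<rho> * wl1sq w y"
  then have "\<forall>y. phi \<rho> w a z' \<le> phi \<rho> w a y" unfolding phi_def .
  then show "z' = z" using phi_unique[OF assms] by blast
qed

lemma QL: "(1/2) * ((u - b) \<bullet> (u - b)) + \<rho> * (w \<bullet> u)^2 = qobj \<rho> w b u + (1/2) * (b \<bullet> b)"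
  unfolding qobj_def Q_quad by (simp add: inner_diff_left inner_diff_right inner_commute field_simps)

lemma wl1sq_abs: "wl1sq w y = (w \<bullet> vabs y)^2"
  unfolding wl1sq_def inner_vec_def vabs_def using wpos by (simp add: abs_mult less_imp_le)

lemma xsol_abs_zero: "a $ j = 0 \<Longrightarrow> xsol \<rho> w (vabs a) $ j = 0"
  by (rule xsol_zero) (simp add: vabs_def)

definition sv :: "real \<Rightarrow> real^'n \<Rightarrow> real^'n \<Rightarrow> real^'n" where
  "sv r v a = (\<chi> j. sgn (a$j) * xsol r v (vabs a) $ j)"

lemma sv_min: "\<forall>y. phi \<rho> w a (sv \<rho> w a) \<le> phi \<rho> w a y"
proof (rule allI)
  fix y
  define b where "b = vabs a"
  define x where "x = xsol \<rho> w b"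
  define z where "z = sv \<rho> w a"
  have zj: "z $ j = sgn (a$j) * x $ j" for j unfolding z_def sv_def x_def b_def by simp
  have xz: "a $ j = 0 \<Longrightarrow> x $ j = 0" for j unfolding x_def b_def by (rule xsol_abs_zero)
  have xn: "0 \<le> x $ j" for j unfolding x_def by (rule xsol_nonneg)
  have c1: "(z$j - a$j) * (z$j - a$j) = (x$j - b$j) * (x$j - b$j)" for j
    using xz[of j] unfolding zj b_def vabs_def
    by (cases "a$j > 0"; cases "a$j < 0") (auto simp: algebra_simps)
  have "(norm (z - a))^2 = (x - b) \<bullet> (x - b)"
    unfolding power2_norm_eq_inner inner_vec_def using c1 by simp
  moreover have "wl1sq w z = (w \<bullet> x)^2"
  proof -
    have "vabs z = x" using xz xn unfolding vabs_def vec_eq_iff zj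
      by (auto simp: abs_mult sgn_if)
    then show ?thesis by (simp add: wl1sq_abs)
  qed
  ultimately have pz: "phi \<rho> w a z = qobj \<rho> w b x + (1/2) * (b \<bullet> b)"
    unfolding phi_def using QL[of x b] by simp
  have "(vabs y - b) \<bullet> (vabs y - b) \<le> (y - a) \<bullet> (y - a)"
    unfolding inner_vec_def b_def vabs_def
  proof (simp, rule sum_mono)
    fix j
    have "\<bar>\<bar>y$j\<bar> - \<bar>a$j\<bar>\<bar> \<le> \<bar>y$j - a$j\<bar>" by (rule abs_triangle_ineq3)
    then have "(\<bar>y$j\<bar> - \<bar>a$j\<bar>)^2 \<le> (y$j - a$j)^2"
      by (metis abs_ge_zero power2_abs power_mono)
    then show "(\<bar>y$j\<bar> - \<bar>a$j\<bar>) * (\<bar>y$j\<bar> - \<bar>a$j\<bar>) \<le> (y$j - a$j) * (y$j - a$j)"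
      by (simp add: power2_eq_square)
  qed
  then have "qobj \<rho> w b (vabs y) + (1/2) * (b \<bullet> b) \<le> phi \<rho> w a y"
    unfolding phi_def wl1sq_abs power2_norm_eq_inner using QL[of "vabs y" b] by simp
  moreover have "qobj \<rho> w b x \<le> qobj \<rho> w b (vabs y)"
  proof -
    have "\<forall>i. 0 \<le> vabs y $ i" by (simp add: vabs_def)
    from KKT_opt[OF xsol_KKT[of b] this] have "qobj \<rho> w b x + (1/2) * ((vabs y - x) \<bullet> (vabs y - x)) \<le> qobj \<rho> w b (vabs y)"
      unfolding x_def .
    moreover have "0 \<le> (vabs y - x) \<bullet> (vabs y - x)" by simp
    ultimately show ?thesis by linarith
  qed
  ultimately show "phi \<rho> w a (sv \<rho> w a) \<le> phi \<rho> w a y" unfolding pz z_def[symmetric] by simp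
qed

lemma prox_eq: "prox \<rho> w a = sv \<rho> w a"
  by (rule prox_char[OF sv_min])

lemma prox_min: "\<forall>y. phi \<rho> w a (prox \<rho> w a) \<le> phi \<rho> w a y"
  using sv_min by (simp add: prox_eq)

lemma prox_lip: "norm (prox \<rho> w a1 - prox \<rho> w a2) \<le> norm (a1 - a2)"
proof -
  define z1 where "z1 = prox \<rho> w a1"
  define z2 where "z2 = prox \<rho> w a2"
  have g1: "phi \<rho> w a1 z1 + (1/2) * (norm (z2 - z1))^2 \<le> phi \<rho> w a1 z2"
    unfolding z1_def by (rule phi_growth[OF prox_min])
  have g2: "phi \<rho> w a2 z2 + (1/2) * (norm (z1 - z2))^2 \<le> phi \<rho> w a2 z1"
    unfolding z2_def by (rule phi_growth[OF prox_min])
  have id: "phi \<rho> w a1 z2 - phi \<rho> w a1 z1 + phi \<rho> w a2 z1 - phi \<rho> w a2 z2 = (z1 - z2) \<bullet> (a1 - a2)"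
    unfolding phi_def power2_norm_eq_inner
    by (simp add: inner_diff_left inner_diff_right inner_commute field_simps)
  have "(norm (z1 - z2))^2 \<le> (z1 - z2) \<bullet> (a1 - a2)"
  proof -
    have "(norm (z2 - z1))^2 = (norm (z1 - z2))^2" by (simp add: norm_minus_commute)
    then show ?thesis using g1 g2 id by linarith
  qed
  also have "\<dots> \<le> norm (z1 - z2) * norm (a1 - a2)" by (rule norm_cauchy_schwarz)
  finally have h: "norm (z1 - z2) * norm (z1 - z2) \<le> norm (z1 - z2) * norm (a1 - a2)"
    by (simp add: power2_eq_square)
  show ?thesis
  proof (cases "norm (z1 - z2) = 0")
    case True then show ?thesis unfolding z1_def z2_def by simp
  next
    case False then have "norm (z1 - z2) > 0" by simp
    with h show ?thesis unfolding z1_def z2_def by simp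
  qed
qed

lemma prox_cont: "continuous_on UNIV (prox \<rho> w)"
  by (rule lipschitz_on_continuous_on[of 1]) (rule lipschitz_onI, auto simp: dist_norm prox_lip)


lemma mat_apply_axis: "(A *v axis j 1) $ i = (A :: real^'n^'n) $ i $ j"
  by (simp add: matrix_vector_mult_def axis_def if_distrib if_distribR cong: if_cong)

lemma symm_transpose:
  fixes A :: "real^'n^'n"
  assumes "\<And>x y. x \<bullet> (A *v y) = (A *v x) \<bullet> y"
  shows "transpose A = A"
proof -
  have "A $ j $ i = A $ i $ j" for i j
  proof -
    have "A $ j $ i = axis j 1 \<bullet> (A *v axis i 1)" by (simp add: inner_axis' mat_apply_axis)
    also have "\<dots> = (A *v axis j 1) \<bullet> axis i 1" by (rule assms)
    also have "\<dots> = A $ i $ j" by (simp add: inner_axis mat_apply_axis)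
    finally show ?thesis .
  qed
  then show ?thesis by (simp add: transpose_def vec_eq_iff)
qed

lemma selK_apply: "selK K *v v = (\<chi> i. if i \<in> K then v$i else 0)"
  by (simp add: selK_def matrix_vector_mult_def vec_eq_iff if_distrib if_distribR cong: if_cong)

lemma Diag_apply: "Diag \<theta> *v v = (\<chi> i. \<theta>$i * v$i)"
  by (simp add: Diag_def matrix_vector_mult_def vec_eq_iff if_distrib if_distribR cong: if_cong)

lemma selK_sym: "x \<bullet> (selK K *v v) = (selK K *v x) \<bullet> v"
  by (simp add: selK_apply inner_vec_def if_distrib if_distribR cong: if_cong)

lemma selK_idem: "selK K *v (selK K *v v) = selK K *v v"
  by (simp add: selK_apply vec_eq_iff)

lemma selK_compl: "selK K *v (v - selK K *v v) = 0"
  by (simp add: selK_apply vec_eq_iff)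

lemma Diag_sym: "x \<bullet> (Diag \<theta> *v v) = (Diag \<theta> *v x) \<bullet> v"
  by (simp add: Diag_apply inner_vec_def algebra_simps)

lemma one_minus_apply: "(mat 1 - A) *v v = v - A *v (v :: real^'n)"
  by (simp add: matrix_vector_mult_diff_rdistrib)

definition Nmat :: "real \<Rightarrow> real^'n \<Rightarrow> 'n set \<Rightarrow> real^'n^'n" where
  "Nmat r v K = selK K ** Qinv r v ** selK K + (mat 1 - selK K)"

definition Pmat :: "real \<Rightarrow> real^'n \<Rightarrow> 'n set \<Rightarrow> real^'n^'n" where
  "Pmat r v K = Qinv r v - Qinv r v ** padinv K (Qinv r v) ** Qinv r v"

lemma N_apply: "Nmat \<rho> w K *v v = selK K *v (Qinv \<rho> w *v (selK K *v v)) + (v - selK K *v v)"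
  by (simp add: Nmat_def matrix_vector_mult_add_rdistrib one_minus_apply matrix_vector_mul_assoc[symmetric])

lemma S_N: "selK K *v (Nmat \<rho> w K *v v) = selK K *v (Qinv \<rho> w *v (selK K *v v))"
  by (simp add: N_apply matrix_vector_right_distrib selK_idem selK_compl)

lemma SQS_zero:
  assumes "selK K *v (Qinv \<rho> w *v (selK K *v e)) = 0"
  shows "selK K *v e = 0"
proof -
  have "(selK K *v e) \<bullet> (Qinv \<rho> w *v (selK K *v e)) = (selK K *v (selK K *v e)) \<bullet> (Qinv \<rho> w *v (selK K *v e))"
    by (simp add: selK_idem)
  also have "\<dots> = (selK K *v e) \<bullet> (selK K *v (Qinv \<rho> w *v (selK K *v e)))"
    by (simp add: selK_sym)
  also have "\<dots> = 0" using assms by simp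
  finally show ?thesis by (rule Qi_pd)
qed

lemma N_inj: "Nmat \<rho> w K *v e = 0 \<Longrightarrow> e = 0"
proof -
  assume h: "Nmat \<rho> w K *v e = 0"
  then have "selK K *v (Qinv \<rho> w *v (selK K *v e)) = 0" using S_N[of K e] by simp
  then have se: "selK K *v e = 0" by (rule SQS_zero)
  have "Nmat \<rho> w K *v e = e" by (simp add: N_apply se)
  then show "e = 0" using h by simp
qed

lemma Ni_right: "Nmat \<rho> w K *v (matrix_inv (Nmat \<rho> w K) *v v) = v"
  and Ni_left: "matrix_inv (Nmat \<rho> w K) *v (Nmat \<rho> w K *v v) = v"
  using inv_apply[of "Nmat \<rho> w K", OF N_inj[of K]] by blast+

lemma T_apply: "padinv K (Qinv \<rho> w) *v v = matrix_inv (Nmat \<rho> w K) *v v - (v - selK K *v v)"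
  by (simp add: padinv_def Nmat_def[symmetric] matrix_vector_mult_diff_rdistrib one_minus_apply)

lemma T_S_aux:
  fixes K :: "'n set" and v :: "real^'n"
  defines "z \<equiv> matrix_inv (Nmat \<rho> w K) *v v"
  shows "selK K *v v = selK K *v (Qinv \<rho> w *v (selK K *v z))"
    and "v - selK K *v v = z - selK K *v z"
proof -
  have Nz: "Nmat \<rho> w K *v z = v" unfolding z_def by (rule Ni_right)
  show Sv: "selK K *v v = selK K *v (Qinv \<rho> w *v (selK K *v z))"
    using S_N[of K z] Nz by simp
  have "v - selK K *v v = Nmat \<rho> w K *v z - selK K *v (Qinv \<rho> w *v (selK K *v z))"
    using Nz Sv by simp
  also have "\<dots> = z - selK K *v z" by (simp add: N_apply)
  finally show "v - selK K *v v = z - selK K *v z" .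
qed

lemma T_S: "padinv K (Qinv \<rho> w) *v v = selK K *v (matrix_inv (Nmat \<rho> w K) *v v)"
  using T_S_aux(2)[where K=K and v=v] unfolding T_apply by simp

lemma T_key: "selK K *v (Qinv \<rho> w *v (padinv K (Qinv \<rho> w) *v v)) = selK K *v v"
  using T_S_aux(1)[where K=K and v=v] unfolding T_S by simp

lemma N_sym: "x \<bullet> (Nmat \<rho> w K *v y) = (Nmat \<rho> w K *v x) \<bullet> y"
proof -
  have "x \<bullet> (selK K *v (Qinv \<rho> w *v (selK K *v y))) = (selK K *v x) \<bullet> (Qinv \<rho> w *v (selK K *v y))"
    by (simp add: selK_sym)
  also have "\<dots> = (Qinv \<rho> w *v (selK K *v x)) \<bullet> (selK K *v y)" by (simp add: Qi_sym)
  also have "\<dots> = (selK K *v (Qinv \<rho> w *v (selK K *v x))) \<bullet> y" by (simp add: selK_sym inner_commute)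
  finally have 1: "x \<bullet> (selK K *v (Qinv \<rho> w *v (selK K *v y))) = (selK K *v (Qinv \<rho> w *v (selK K *v x))) \<bullet> y" .
  have 2: "x \<bullet> (selK K *v y) = (selK K *v x) \<bullet> y" by (rule selK_sym)
  have 3: "x \<bullet> (Nmat \<rho> w K *v y) = x \<bullet> (selK K *v (Qinv \<rho> w *v (selK K *v y))) + (x \<bullet> y - x \<bullet> (selK K *v y))"
    unfolding N_apply by (simp add: inner_add_right inner_diff_right)
  have 4: "(Nmat \<rho> w K *v x) \<bullet> y = (selK K *v (Qinv \<rho> w *v (selK K *v x))) \<bullet> y + (x \<bullet> y - (selK K *v x) \<bullet> y)"
    unfolding N_apply by (simp add: inner_add_left inner_diff_left)
  show ?thesis using 1 2 3 4 by linarith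
qed

lemma Ni_sym: "x \<bullet> (matrix_inv (Nmat \<rho> w K) *v y) = (matrix_inv (Nmat \<rho> w K) *v x) \<bullet> y"
proof -
  let ?p = "matrix_inv (Nmat \<rho> w K) *v x" and ?q = "matrix_inv (Nmat \<rho> w K) *v y"
  have "x \<bullet> ?q = (Nmat \<rho> w K *v ?p) \<bullet> ?q" by (simp add: Ni_right)
  also have "\<dots> = ?p \<bullet> (Nmat \<rho> w K *v ?q)" by (simp add: N_sym)
  also have "\<dots> = ?p \<bullet> y" by (simp add: Ni_right)
  finally show ?thesis .
qed

lemma T_sym: "x \<bullet> (padinv K (Qinv \<rho> w) *v y) = (padinv K (Qinv \<rho> w) *v x) \<bullet> y"
proof -
  have 1: "x \<bullet> (padinv K (Qinv \<rho> w) *v y) = x \<bullet> (matrix_inv (Nmat \<rho> w K) *v y) - (x \<bullet> y - x \<bullet> (selK K *v y))"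
    unfolding T_apply by (simp add: inner_diff_right)
  have 2: "(padinv K (Qinv \<rho> w) *v x) \<bullet> y = (matrix_inv (Nmat \<rho> w K) *v x) \<bullet> y - (x \<bullet> y - (selK K *v x) \<bullet> y)"
    unfolding T_apply by (simp add: inner_diff_left)
  show ?thesis using 1 2 Ni_sym[of x K y] selK_sym[of x K y] by linarith
qed

lemma P_apply: "Pmat \<rho> w K *v v = Qinv \<rho> w *v v - Qinv \<rho> w *v (padinv K (Qinv \<rho> w) *v (Qinv \<rho> w *v v))"
  by (simp add: Pmat_def matrix_vector_mult_diff_rdistrib matrix_vector_mul_assoc[symmetric])

lemma P_sym: "x \<bullet> (Pmat \<rho> w K *v y) = (Pmat \<rho> w K *v x) \<bullet> y"
proof -
  let ?Q = "Qinv \<rho> w" and ?T = "padinv K (Qinv \<rho> w)"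
  have 1: "x \<bullet> (Pmat \<rho> w K *v y) = x \<bullet> (?Q *v y) - x \<bullet> (?Q *v (?T *v (?Q *v y)))"
    unfolding P_apply by (simp add: inner_diff_right)
  have 2: "(Pmat \<rho> w K *v x) \<bullet> y = (?Q *v x) \<bullet> y - (?Q *v (?T *v (?Q *v x))) \<bullet> y"
    unfolding P_apply by (simp add: inner_diff_left)
  have 3: "x \<bullet> (?Q *v (?T *v (?Q *v y))) = (?Q *v x) \<bullet> (?T *v (?Q *v y))" by (rule Qi_sym)
  have 4: "(?Q *v x) \<bullet> (?T *v (?Q *v y)) = (?T *v (?Q *v x)) \<bullet> (?Q *v y)" by (rule T_sym)
  have 5: "(?T *v (?Q *v x)) \<bullet> (?Q *v y) = (?Q *v (?T *v (?Q *v x))) \<bullet> y" by (rule Qi_sym)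
  show ?thesis using 1 2 3 4 5 Qi_sym[of x y] by linarith
qed

lemma P_psd: "0 \<le> v \<bullet> (Pmat \<rho> w K *v v)"
proof -
  define u where "u = Qinv \<rho> w *v v"
  define y where "y = padinv K (Qinv \<rho> w) *v u"
  have Sy: "selK K *v y = y" unfolding y_def T_S by (simp add: selK_idem)
  have SQy: "selK K *v (Qinv \<rho> w *v y) = selK K *v u" unfolding y_def by (rule T_key)
  have uy: "u \<bullet> y = y \<bullet> (Qinv \<rho> w *v y)"
  proof -
    have "u \<bullet> y = u \<bullet> (selK K *v y)" using Sy by simp
    also have "\<dots> = (selK K *v u) \<bullet> y" by (rule selK_sym)
    also have "\<dots> = (selK K *v (Qinv \<rho> w *v y)) \<bullet> y" using SQy by simp
    also have "\<dots> = (Qinv \<rho> w *v y) \<bullet> (selK K *v y)" by (simp add: selK_sym)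
    also have "\<dots> = y \<bullet> (Qinv \<rho> w *v y)" using Sy by (simp add: inner_commute)
    finally show ?thesis .
  qed
  have vy: "v \<bullet> (Qinv \<rho> w *v y) = u \<bullet> y" unfolding u_def by (rule Qi_sym)
  have yv: "y \<bullet> (Qinv \<rho> w *v v) = u \<bullet> y" unfolding u_def by (simp add: inner_commute)
  have "v \<bullet> (Pmat \<rho> w K *v v) = (v - y) \<bullet> (Qinv \<rho> w *v (v - y))"
    unfolding P_apply u_def[symmetric] y_def[symmetric]
  proof -
    have yu: "y \<bullet> u = u \<bullet> y" by (rule inner_commute)
    have "(v - y) \<bullet> (Qinv \<rho> w *v (v - y)) = v \<bullet> u - v \<bullet> (Qinv \<rho> w *v y) - (y \<bullet> u - y \<bullet> (Qinv \<rho> w *v y))"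
      by (simp add: matrix_vector_mult_diff_distrib inner_diff_left inner_diff_right u_def[symmetric])
    then show "v \<bullet> (u - Qinv \<rho> w *v y) = (v - y) \<bullet> (Qinv \<rho> w *v (v - y))"
      using uy vy yu by (simp add: inner_diff_right)
  qed
  also have "\<dots> \<ge> 0" by (rule Qi_psd)
  finally show ?thesis .
qed


lemma P_x:
  assumes K: "K \<in> Kfam \<rho> w b"
  shows "Pmat \<rho> w K *v b = xsol \<rho> w b"
proof -
  let ?S = "selK K" and ?Q = "Qinv \<rho> w" and ?N = "Nmat \<rho> w K"
  define x where "x = xsol \<rho> w b"
  define \<mu> where "\<mu> = b - Qmat \<rho> w *v x"
  have sup: "\<mu> $ i \<noteq> 0 \<Longrightarrow> i \<in> K" for i
    using K unfolding Kfam_def musol_eq \<mu>_def x_def by blast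
  have Smu: "?S *v \<mu> = \<mu>" unfolding selK_apply vec_eq_iff using sup by auto
  have xK: "i \<in> K \<Longrightarrow> x $ i = 0" for i using K unfolding Kfam_def Iset_def x_def by blast
  have Sx: "?S *v x = 0" unfolding selK_apply vec_eq_iff using xK by auto
  have b: "b = Qmat \<rho> w *v x + \<mu>" unfolding \<mu>_def by simp
  have Qb: "?Q *v b = x + ?Q *v \<mu>"
    by (subst b) (simp add: matrix_vector_right_distrib Qi_left)
  define z where "z = matrix_inv ?N *v (?Q *v b)"
  have Nz: "?N *v z = ?Q *v b" unfolding z_def by (rule Ni_right)
  have Nmu: "?N *v \<mu> = ?S *v (?Q *v b)"
  proof -
    have "?N *v \<mu> = ?S *v (?Q *v \<mu>)" unfolding N_apply Smu by simp
    also have "\<dots> = ?S *v (?Q *v b - x)" using Qb by simp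
    also have "\<dots> = ?S *v (?Q *v b)" by (simp add: matrix_vector_mult_diff_distrib Sx)
    finally show ?thesis .
  qed
  have "?S *v (?N *v (z - \<mu>)) = 0"
    by (simp add: matrix_vector_mult_diff_distrib Nz Nmu selK_idem)
  then have "?S *v (?Q *v (?S *v (z - \<mu>))) = 0" by (simp add: S_N)
  then have "?S *v (z - \<mu>) = 0" by (rule SQS_zero)
  then have Sz: "?S *v z = \<mu>" using Smu by (simp add: matrix_vector_mult_diff_distrib)
  have T: "padinv K ?Q *v (?Q *v b) = \<mu>" unfolding T_S z_def[symmetric] Sz ..
  have "Pmat \<rho> w K *v b = ?Q *v b - ?Q *v \<mu>" unfolding P_apply T ..
  also have "\<dots> = x" using Qb by simp
  finally show ?thesis unfolding x_def .
qed

lemma Qi_x: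
  assumes "\<forall>i. 0 \<le> (Qinv \<rho> w *v b) $ i"
  shows "xsol \<rho> w b = Qinv \<rho> w *v b"
  by (rule xsol_eq) (use assms in \<open>simp add: KKT_def Qi_right\<close>)

lemma hat_cases:
  assumes "P \<in> hatHS \<rho> w b"
  shows "(P = Qinv \<rho> w \<and> (\<forall>i. 0 \<le> (Qinv \<rho> w *v b) $ i)) \<or> (\<exists>K\<in>Kfam \<rho> w b. P = Pmat \<rho> w K)"
  using assms unfolding hatHS_def Let_def Pmat_def
  by (auto split: if_splits simp: less_imp_le not_less)

lemma hat_apply: "P \<in> hatHS \<rho> w b \<Longrightarrow> P *v b = xsol \<rho> w b"
  using hat_cases[of P b] Qi_x P_x by metis

lemma hat_sym: "P \<in> hatHS \<rho> w b \<Longrightarrow> x \<bullet> (P *v y) = (P *v x) \<bullet> y"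
  using hat_cases[of P b] Qi_sym P_sym by metis

lemma hat_psd: "P \<in> hatHS \<rho> w b \<Longrightarrow> 0 \<le> v \<bullet> (P *v v)"
  using hat_cases[of P b] Qi_psd P_psd by metis

lemma Kfam_ne: "{i. musol \<rho> w b $ i \<noteq> 0} \<in> Kfam \<rho> w b"
proof -
  have "musol \<rho> w b $ i * xsol \<rho> w b $ i = 0" for i
    using xsol_KKT[of b] unfolding KKT_def musol_eq by blast
  then show ?thesis unfolding Kfam_def Iset_def by auto
qed

lemma hat_ne: "hatHS \<rho> w b \<noteq> {}"
  using Kfam_ne[of b] unfolding hatHS_def Let_def by auto

lemma hat_sub: "hatHS \<rho> w b \<subseteq> insert (Qinv \<rho> w) (range (Pmat \<rho> w))"
  unfolding hatHS_def Let_def Pmat_def by auto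

lemma hat_finite: "finite (hatHS \<rho> w b)"
  by (rule finite_subset[OF hat_sub]) simp


lemma sgn_self: "sgn (x::real) * x = \<bar>x\<bar>"
  by (auto simp: sgn_if)

lemma SGN_abs: "\<theta> \<in> SGN a \<Longrightarrow> Diag \<theta> *v a = vabs a"
proof -
  assume t: "\<theta> \<in> SGN a"
  have "\<theta>$j * a$j = \<bar>a$j\<bar>" for j
  proof (cases "a$j = 0")
    case True then show ?thesis by simp
  next
    case False then have "\<theta>$j = sgn (a$j)" using t unfolding SGN_def by blast
    then show ?thesis by (simp add: sgn_self)
  qed
  then show ?thesis unfolding Diag_apply vabs_def by simp
qed

lemma SGN_sv: "\<theta> \<in> SGN a \<Longrightarrow> Diag \<theta> *v xsol \<rho> w (vabs a) = sv \<rho> w a"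
proof -
  assume t: "\<theta> \<in> SGN a"
  have "\<theta>$j * xsol \<rho> w (vabs a) $ j = sgn (a$j) * xsol \<rho> w (vabs a) $ j" for j
  proof (cases "a$j = 0")
    case True then show ?thesis using xsol_abs_zero by simp
  next
    case False then have "\<theta>$j = sgn (a$j)" using t unfolding SGN_def by blast
    then show ?thesis by simp
  qed
  then show ?thesis unfolding Diag_apply sv_def vec_eq_iff by simp
qed

lemma dHS_form: "M \<in> dHS \<rho> w a \<Longrightarrow> \<exists>\<theta> P. \<theta> \<in> SGN a \<and> P \<in> hatHS \<rho> w (vabs a) \<and> (\<forall>v. M *v v = Diag \<theta> *v (P *v (Diag \<theta> *v v)))"
  unfolding dHS_def by (auto simp: matrix_vector_mul_assoc matrix_mul_assoc)

lemma dHS_apply: "M \<in> dHS \<rho> w a \<Longrightarrow> M *v a = prox \<rho> w a"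
proof -
  assume "M \<in> dHS \<rho> w a"
  then obtain \<theta> P where t: "\<theta> \<in> SGN a" and P: "P \<in> hatHS \<rho> w (vabs a)"
    and M: "\<And>v. M *v v = Diag \<theta> *v (P *v (Diag \<theta> *v v))" using dHS_form by blast
  show ?thesis unfolding M SGN_abs[OF t] hat_apply[OF P] SGN_sv[OF t] prox_eq ..
qed

lemma dHS_sym: "M \<in> dHS \<rho> w a \<Longrightarrow> x \<bullet> (M *v y) = (M *v x) \<bullet> y"
proof -
  assume "M \<in> dHS \<rho> w a"
  then obtain \<theta> P where t: "\<theta> \<in> SGN a" and P: "P \<in> hatHS \<rho> w (vabs a)"
    and M: "\<And>v. M *v v = Diag \<theta> *v (P *v (Diag \<theta> *v v))" using dHS_form by blast
  have "x \<bullet> (M *v y) = (Diag \<theta> *v x) \<bullet> (P *v (Diag \<theta> *v y))" unfolding M by (rule Diag_sym)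
  also have "\<dots> = (P *v (Diag \<theta> *v x)) \<bullet> (Diag \<theta> *v y)" by (rule hat_sym[OF P])
  also have "\<dots> = (Diag \<theta> *v (P *v (Diag \<theta> *v x))) \<bullet> y" by (rule Diag_sym)
  finally show ?thesis unfolding M .
qed

lemma dHS_psd: "M \<in> dHS \<rho> w a \<Longrightarrow> 0 \<le> v \<bullet> (M *v v)"
proof -
  assume "M \<in> dHS \<rho> w a"
  then obtain \<theta> P where t: "\<theta> \<in> SGN a" and P: "P \<in> hatHS \<rho> w (vabs a)"
    and M: "\<And>v. M *v v = Diag \<theta> *v (P *v (Diag \<theta> *v v))" using dHS_form by blast
  have "v \<bullet> (M *v v) = (Diag \<theta> *v v) \<bullet> (P *v (Diag \<theta> *v v))" unfolding M by (rule Diag_sym)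
  also have "\<dots> \<ge> 0" by (rule hat_psd[OF P])
  finally show ?thesis .
qed

lemma dHS_ne: "dHS \<rho> w a \<noteq> {}"
proof -
  obtain P where "P \<in> hatHS \<rho> w (vabs a)" using hat_ne by blast
  moreover have "(\<chi> j. sgn (a$j)) \<in> SGN a" unfolding SGN_def by (auto simp: sgn_if)
  ultimately show ?thesis unfolding dHS_def by blast
qed

lemma DPD: "Diag \<theta> ** P ** Diag \<theta> = (\<chi> i j. \<theta>$i * P$i$j * \<theta>$j)"
  by (simp add: Diag_def matrix_matrix_mult_def vec_eq_iff if_distrib if_distribR cong: if_cong)

lemma SGN_box: "SGN a = cbox (\<chi> j. if a$j = 0 then -1 else sgn (a$j)) (\<chi> j. if a$j = 0 then 1 else sgn (a$j))"
  unfolding SGN_def mem_box_cart set_eq_iff by (auto simp: mem_box_cart) (meson order_antisym)+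

lemma dHS_compact: "compact (dHS \<rho> w a)"
proof -
  have e: "dHS \<rho> w a = (\<Union>P\<in>hatHS \<rho> w (vabs a). (\<lambda>\<theta>. Diag \<theta> ** P ** Diag \<theta>) ` SGN a)"
    unfolding dHS_def by auto
  show ?thesis unfolding e
  proof (rule compact_UN[OF hat_finite])
    fix P :: "real^'n^'n"
    have "continuous_on (SGN a) (\<lambda>\<theta>. Diag \<theta> ** P ** Diag \<theta>)"
      unfolding DPD by (intro continuous_intros)
    moreover have "compact (SGN a)" unfolding SGN_box by (rule compact_cbox)
    ultimately show "compact ((\<lambda>\<theta>. Diag \<theta> ** P ** Diag \<theta>) ` SGN a)"
      by (rule compact_continuous_image)
  qed
qed


lemma xsol_prox: "\<forall>j. 0 \<le> b$j \<Longrightarrow> xsol \<rho> w b = prox \<rho> w b"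
proof -
  assume b: "\<forall>j. 0 \<le> b$j"
  have vb: "vabs b = b" using b unfolding vabs_def vec_eq_iff by simp
  have "sgn (b$j) * xsol \<rho> w b $ j = xsol \<rho> w b $ j" for j
  proof (cases "b$j = 0")
    case True then show ?thesis using xsol_zero[of b j] by simp
  next
    case False then have "b$j > 0" using b[rule_format, of j] by linarith
    then show ?thesis by simp
  qed
  then show ?thesis unfolding prox_eq sv_def vb vec_eq_iff by simp
qed

lemma cont_X: "continuous_on UNIV (\<lambda>a. xsol \<rho> w (vabs a))"
proof -
  have eq: "(\<lambda>a. xsol \<rho> w (vabs a)) = (\<lambda>a. prox \<rho> w (vabs a))"
    by (rule ext, rule xsol_prox) (simp add: vabs_def)
  show ?thesis unfolding eq
    by (rule continuous_on_compose2[OF prox_cont cont_vabs]) simp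
qed

lemma cont_mu: "continuous_on UNIV (\<lambda>a. musol \<rho> w (vabs a))"
  unfolding musol_eq
  by (intro continuous_intros cont_vabs bounded_linear.continuous_on[OF matrix_vector_mul_bounded_linear] cont_X)

lemma cont_Qb: "continuous_on UNIV (\<lambda>a. Qinv \<rho> w *v vabs a)"
  by (intro bounded_linear.continuous_on[OF matrix_vector_mul_bounded_linear] cont_vabs)

lemma Kfam_mono:
  assumes "\<forall>i. xsol \<rho> w b $ i \<noteq> 0 \<longrightarrow> xsol \<rho> w b' $ i \<noteq> 0"
    and "\<forall>i. musol \<rho> w b $ i \<noteq> 0 \<longrightarrow> musol \<rho> w b' $ i \<noteq> 0"
  shows "Kfam \<rho> w b' \<subseteq> Kfam \<rho> w b"
  using assms unfolding Kfam_def Iset_def by blast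

lemma hat_mono:
  assumes "Kfam \<rho> w b' \<subseteq> Kfam \<rho> w b"
    and "\<forall>i. (Qinv \<rho> w *v b) $ i > 0 \<longrightarrow> (Qinv \<rho> w *v b') $ i > 0"
    and "\<forall>i. (Qinv \<rho> w *v b) $ i < 0 \<longrightarrow> (Qinv \<rho> w *v b') $ i < 0"
  shows "hatHS \<rho> w b' \<subseteq> hatHS \<rho> w b"
proof -
  let ?Qi = "Qinv \<rho> w"
  define S where "S c = {?Qi - ?Qi ** padinv K ?Qi ** ?Qi | K. K \<in> Kfam \<rho> w c}" for c
  have h: "hatHS \<rho> w c = (if (\<forall>i. (?Qi *v c)$i > 0) then {?Qi}
        else if (\<exists>i. (?Qi *v c)$i < 0) then S c else insert ?Qi (S c))" for c
    unfolding hatHS_def Let_def S_def ..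
  have SS: "S b' \<subseteq> S b" unfolding S_def using assms(1) by blast
  have sub: "hatHS \<rho> w b' \<subseteq> insert ?Qi (S b')" unfolding h by auto
  show ?thesis
  proof (cases "\<forall>i. (?Qi *v b)$i > 0")
    case True
    then have "\<forall>i. (?Qi *v b')$i > 0" using assms(2) by blast
    then show ?thesis unfolding h using True by simp
  next
    case F1: False
    show ?thesis
    proof (cases "\<exists>i. (?Qi *v b)$i < 0")
      case True
      then have "\<exists>i. (?Qi *v b')$i < 0" using assms(3) by blast
      then have nA: "\<not> (\<forall>i. (?Qi *v b')$i > 0)" using less_asym by blast
      have "hatHS \<rho> w b' = S b'"
        by (simp only: h[of b'] if_not_P[OF nA] if_P[OF \<open>\<exists>i. (?Qi *v b')$i < 0\<close>])
      moreover have "hatHS \<rho> w b = S b"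
        by (simp only: h[of b] if_not_P[OF F1] if_P[OF True])
      ultimately show ?thesis using SS by simp
    next
      case False
      have "hatHS \<rho> w b = insert ?Qi (S b)"
        by (simp only: h[of b] if_not_P[OF F1] if_not_P[OF False])
      then show ?thesis using sub SS by auto
    qed
  qed
qed

lemma SGN_mono:
  assumes "\<forall>i. a $ i > 0 \<longrightarrow> a' $ i > 0" "\<forall>i. a $ i < 0 \<longrightarrow> a' $ i < 0"
  shows "SGN a' \<subseteq> SGN a"
proof
  fix \<theta> assume t: "\<theta> \<in> SGN a'"
  have "(a$j \<noteq> 0 \<longrightarrow> \<theta>$j = sgn (a$j)) \<and> (a$j = 0 \<longrightarrow> -1 \<le> \<theta>$j \<and> \<theta>$j \<le> 1)" for j
  proof (cases "a'$j = 0")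
    case True
    then have "a$j = 0" using assms by (metis less_irrefl linorder_neqE_linordered_idom)
    then show ?thesis using t True unfolding SGN_def by auto
  next
    case False
    then have th: "\<theta>$j = sgn (a'$j)" using t unfolding SGN_def by blast
    show ?thesis
    proof (cases "a$j = 0")
      case True then show ?thesis using th by (auto simp: sgn_if)
    next
      case False
      then have "sgn (a'$j) = sgn (a$j)" using assms
        by (metis linorder_neqE_linordered_idom sgn_neg sgn_pos)
      then show ?thesis using th False by simp
    qed
  qed
  then show "\<theta> \<in> SGN a" unfolding SGN_def by blast
qed

lemma dHS_local: "\<exists>d>0. \<forall>a'. dist a' a < d \<longrightarrow> dHS \<rho> w a' \<subseteq> dHS \<rho> w a"
proof -
  have idc: "continuous_on UNIV (\<lambda>x::real^'n. x)" by (rule continuous_on_id)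
  have ev: "eventually (\<lambda>a'. dHS \<rho> w a' \<subseteq> dHS \<rho> w a) (nhds a)"
    using ev_gt[OF idc, of a] ev_lt[OF idc, of a] ev_ne[OF cont_X, of a] ev_ne[OF cont_mu, of a]
      ev_gt[OF cont_Qb, of a] ev_lt[OF cont_Qb, of a]
  proof (eventually_elim)
    case (elim a')
    have "SGN a' \<subseteq> SGN a" using SGN_mono elim(1,2) by blast
    moreover have "hatHS \<rho> w (vabs a') \<subseteq> hatHS \<rho> w (vabs a)"
      by (rule hat_mono[OF Kfam_mono[OF elim(3,4)] elim(5,6)])
    ultimately show ?case unfolding dHS_def by blast
  qed
  then show ?thesis unfolding eventually_nhds_metric by blast
qed


lemma dHS_exact:
  assumes "M \<in> dHS \<rho> w a'" "dHS \<rho> w a' \<subseteq> dHS \<rho> w a"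
  shows "prox \<rho> w a' - prox \<rho> w a = M *v (a' - a)"
proof -
  have "M \<in> dHS \<rho> w a" using assms by blast
  then show ?thesis using dHS_apply[OF assms(1)] dHS_apply[of M a]
    by (simp add: matrix_vector_mult_diff_distrib)
qed

lemma h_eq:
  assumes "M \<in> dHS \<rho> w (a + t *\<^sub>R d)" "dHS \<rho> w (a + t *\<^sub>R d) \<subseteq> dHS \<rho> w a" "t \<noteq> 0"
  shows "(1/t) *\<^sub>R (prox \<rho> w (a + t *\<^sub>R d) - prox \<rho> w a) = M *v d"
  using dHS_exact[OF assms(1,2)] assms(3) by (simp add: matrix_vector_mult_scaleR)

lemma dir_diff: "dir_differentiable_at (prox \<rho> w) a"
  unfolding dir_differentiable_at_def
proof
  fix d :: "real^'n"
  define h where "h t = (1/t) *\<^sub>R (prox \<rho> w (a + t *\<^sub>R d) - prox \<rho> w a)" for t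
  obtain \<delta> where dp: "\<delta> > 0" and dl: "\<And>a'. dist a' a < \<delta> \<Longrightarrow> dHS \<rho> w a' \<subseteq> dHS \<rho> w a"
    using dHS_local[of a] by blast
  define \<epsilon> where "\<epsilon> = \<delta> / (norm d + 1)"
  have nd: "norm d + 1 > 0" by (simp add: add_nonneg_pos)
  have ep: "\<epsilon> > 0" unfolding \<epsilon>_def using dp by (simp add: add_nonneg_pos)
  have inball: "dist (a + t *\<^sub>R d) a < \<delta>" if "0 < t" "t < \<epsilon>" for t
  proof -
    have "dist (a + t *\<^sub>R d) a = t * norm d" using that by (simp add: dist_norm)
    also have "\<dots> \<le> t * (norm d + 1)" using that by simp
    also have "\<dots> < \<epsilon> * (norm d + 1)" using that by (simp add: add_nonneg_pos)
    also have "\<dots> = \<delta>" unfolding \<epsilon>_def using nd by simp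
    finally show ?thesis .
  qed
  have "h constant_on {0<..<\<epsilon>}"
  proof (rule locally_constant_imp_constant[OF connected_Ioo])
    fix \<sigma> assume s: "\<sigma> \<in> {0<..<\<epsilon>}"
    obtain \<delta>s where dsp: "\<delta>s > 0" and dsl: "\<And>a'. dist a' (a + \<sigma> *\<^sub>R d) < \<delta>s \<Longrightarrow> dHS \<rho> w a' \<subseteq> dHS \<rho> w (a + \<sigma> *\<^sub>R d)"
      using dHS_local[of "a + \<sigma> *\<^sub>R d"] by blast
    define r where "r = \<delta>s / (norm d + 1)"
    have rp: "r > 0" unfolding r_def using dsp by (simp add: add_nonneg_pos)
    show "\<exists>T. openin (top_of_set {0<..<\<epsilon>}) T \<and> \<sigma> \<in> T \<and> (\<forall>x\<in>T. h x = h \<sigma>)"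
    proof (intro exI conjI)
      show "openin (top_of_set {0<..<\<epsilon>}) ({0<..<\<epsilon>} \<inter> ball \<sigma> r)" by (rule openin_open_Int) simp
      show "\<sigma> \<in> {0<..<\<epsilon>} \<inter> ball \<sigma> r" using s rp by simp
      show "\<forall>t\<in>{0<..<\<epsilon>} \<inter> ball \<sigma> r. h t = h \<sigma>"
      proof
        fix t assume t: "t \<in> {0<..<\<epsilon>} \<inter> ball \<sigma> r"
        have "dist (a + t *\<^sub>R d) (a + \<sigma> *\<^sub>R d) = \<bar>t - \<sigma>\<bar> * norm d"
          by (simp add: dist_norm scaleR_diff_left[symmetric])
        also have "\<dots> \<le> \<bar>t - \<sigma>\<bar> * (norm d + 1)" by (simp add: mult_left_mono)
        also have "\<dots> < r * (norm d + 1)"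
          using t by (intro mult_strict_right_mono) (auto simp: dist_norm add_nonneg_pos abs_minus_commute)
        also have "\<dots> = \<delta>s" unfolding r_def using nd by simp
        finally have sub1: "dHS \<rho> w (a + t *\<^sub>R d) \<subseteq> dHS \<rho> w (a + \<sigma> *\<^sub>R d)" by (rule dsl)
        obtain M where M: "M \<in> dHS \<rho> w (a + t *\<^sub>R d)" using dHS_ne by blast
        have t0: "0 < t" "t < \<epsilon>" using t by auto
        have s0: "0 < \<sigma>" "\<sigma> < \<epsilon>" using s by auto
        have "h t = M *v d" unfolding h_def by (rule h_eq[OF M dl[OF inball[OF t0]]]) (use t0 in simp)
        moreover have "h \<sigma> = M *v d" unfolding h_def
          by (rule h_eq[OF _ dl[OF inball[OF s0]]]) (use M sub1 s0 in auto)
        ultimately show "h t = h \<sigma>" by simp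
      qed
    qed
  qed
  then obtain L where L: "\<forall>t\<in>{0<..<\<epsilon>}. h t = L" unfolding constant_on_def by blast
  have "eventually (\<lambda>t. h t = L) (at_right 0)"
    unfolding eventually_at_right_field using ep L by auto
  then have "(h \<longlongrightarrow> L) (at_right 0)" by (rule tendsto_eventually)
  then show "\<exists>L. ((\<lambda>t. (1/t) *\<^sub>R (prox \<rho> w (a + t *\<^sub>R d) - prox \<rho> w a)) \<longlongrightarrow> L) (at_right 0)"
    unfolding h_def by blast
qed

end

theorem proposition3p4:
  fixes w :: "real^'n" and \<rho> :: real
  assumes "\<forall>i. w$i > 0" and "\<rho> > 0"
  shows "(\<forall>a. dHS \<rho> w a \<noteq> {}) \<and> (\<forall>a. compact (dHS \<rho> w a)) \<and> usc_multifun (dHS \<rho> w)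
    \<and> (\<forall>a. \<forall>M\<in>dHS \<rho> w a. transpose M = M \<and> (\<forall>v. 0 \<le> v \<bullet> (M *v v)))
    \<and> strongly_semismooth (prox \<rho> w) (dHS \<rho> w)"
proof (intro conjI allI ballI)
  note A = assms(1,2)
  show "dHS \<rho> w a \<noteq> {}" for a by (rule dHS_ne[OF A])
  show "compact (dHS \<rho> w a)" for a by (rule dHS_compact[OF A])
  show "usc_multifun (dHS \<rho> w)"
    unfolding usc_multifun_def
  proof (intro allI impI)
    fix a and U :: "(real^'n^'n) set" assume "open U \<and> dHS \<rho> w a \<subseteq> U"
    then show "\<exists>\<delta>>0. \<forall>a'. dist a' a < \<delta> \<longrightarrow> dHS \<rho> w a' \<subseteq> U"
      using dHS_local[OF A, of a] by blast
  qed
  show "transpose M = M" if "M \<in> dHS \<rho> w a" for a M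
    by (rule symm_transpose[OF A]) (rule dHS_sym[OF A that])
  show "0 \<le> v \<bullet> (M *v v)" if "M \<in> dHS \<rho> w a" for a M v
    by (rule dHS_psd[OF A that])
  show "strongly_semismooth (prox \<rho> w) (dHS \<rho> w)"
    unfolding strongly_semismooth_def
  proof (intro conjI allI)
    show "locally_lipschitz (prox \<rho> w)"
      unfolding locally_lipschitz_def
      using prox_lip[OF A] zero_less_one by (metis mult_1)
    fix a
    show "strongly_semismooth_at (prox \<rho> w) (dHS \<rho> w) a"
      unfolding strongly_semismooth_at_def
    proof (intro conjI)
      show "dir_differentiable_at (prox \<rho> w) a" by (rule dir_diff[OF A])
      obtain \<delta> where dp: "\<delta> > 0" and dl: "\<And>a'. dist a' a < \<delta> \<Longrightarrow> dHS \<rho> w a' \<subseteq> dHS \<rho> w a"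
        using dHS_local[OF A, of a] by blast
      show "\<exists>C \<delta>. \<delta> > 0 \<and> (\<forall>a'. norm (a' - a) < \<delta> \<longrightarrow> (\<forall>M\<in>dHS \<rho> w a'.
        norm (prox \<rho> w a' - prox \<rho> w a - M *v (a' - a)) \<le> C * (norm (a' - a))^2))"
      proof (intro exI conjI allI impI ballI)
        show "0 < \<delta>" by (rule dp)
        fix a' M assume "norm (a' - a) < \<delta>" and M: "M \<in> dHS \<rho> w a'"
        then have "dHS \<rho> w a' \<subseteq> dHS \<rho> w a" using dl by (simp add: dist_norm)
        then have "prox \<rho> w a' - prox \<rho> w a = M *v (a' - a)" by (rule dHS_exact[OF A M])
        then show "norm (prox \<rho> w a' - prox \<rho> w a - M *v (a' - a)) \<le> 0 * (norm (a' - a))^2" by simp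
      qed
    qed
  qed
qed

end
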